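(* Let $\eta>0,\lambda>0$ with $\eta\lambda<1$, let $x(t)\ne0$ and $x(t+1)=(1-\eta\lambda)x(t)-\eta\nabla L(x(t))$. Then $$L(x(t))-L(x(t+1))\ge \eta\left(\frac{1}{1-\eta\lambda}-\frac{\rho\eta}{2\|x(t)\|_2^2(1-\eta\lambda)^2}\right)\|\nabla L(x(t))\|_2^2 .$$ If moreover $\eta\lambda\le\tfrac12$, then $$L(x(t))-L(x(t+1))\ge \eta\left(1-\frac{2\rho\eta}{\|x(t)\|_2^2}\right)\|\nabla L(x(t))\|_2^2 .$$
   Context: $L:\mathbb{R}^d\setminus\{0\}\to\mathbb{R}$ is $C^2$ and scale invariant, i.e. $L(cx)=L(x)$ for all $c>0$ and $x\neq0$. $\rho:=\max_{\|x\|_2=1}\|\nabla^2L(x)\|_2$ (spectral norm). *)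

theory Defs
  imports "HOL-Analysis.Analysis"
begin

text \<open>L is C^2 on the open set S, with gradient G and Hessian H (as a bounded linear
operator, so that norm (H x) is the operator = spectral norm); the Hessian is continuous.\<close>
definition C2_on :: "'a::euclidean_space set \<Rightarrow> ('a \<Rightarrow> real) \<Rightarrow> ('a \<Rightarrow> 'a) \<Rightarrow> ('a \<Rightarrow> 'a \<Rightarrow>\<^sub>L 'a) \<Rightarrow> bool" where
  "C2_on S L G H \<longleftrightarrow> open S \<and> (\<forall>x\<in>S. GDERIV L x :> G x)
     \<and> (\<forall>x\<in>S. (G has_derivative blinfun_apply (H x)) (at x)) \<and> continuous_on S H"

definition scale_invariant :: "('a::real_vector \<Rightarrow> real) \<Rightarrow> bool" where
  "scale_invariant L \<longleftrightarrow> (\<forall>c x. c > 0 \<longrightarrow> x \<noteq> 0 \<longrightarrow> L (c *\<^sub>R x) = L x)"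

definition hess_bound :: "('a::euclidean_space \<Rightarrow> 'a \<Rightarrow>\<^sub>L 'a) \<Rightarrow> real" where
  "hess_bound H = Sup ((\<lambda>x. norm (H x)) ` sphere 0 1)"

end

theory Submission imports Defs begin

lemma L_grad: assumes "C2_on (- {0}) L G H" "y \<noteq> 0"
  shows "(L has_derivative (\<lambda>h. h \<bullet> G y)) (at y)"
  using assms unfolding C2_on_def gderiv_def by auto

lemma G_deriv: assumes "C2_on (- {0}) L G H" "y \<noteq> 0"
  shows "(G has_derivative blinfun_apply (H y)) (at y)"
  using assms unfolding C2_on_def by auto

lemma G_scale:
  fixes L :: "'a::euclidean_space \<Rightarrow> real"
  assumes C: "C2_on (- {0}) L G H" and si: "scale_invariant L" and y: "y \<noteq> 0" and c: "c > 0"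
  shows "c *\<^sub>R G (c *\<^sub>R y) = G y"
proof -
  have s: "((\<lambda>z. c *\<^sub>R z) has_derivative (\<lambda>h. c *\<^sub>R h)) (at y)"
    by (auto intro!: derivative_eq_intros)
  have cy: "c *\<^sub>R y \<noteq> 0" using y c by auto
  have d1: "((\<lambda>z. L (c *\<^sub>R z)) has_derivative (\<lambda>h. (c *\<^sub>R h) \<bullet> G (c *\<^sub>R y))) (at y)"
    using has_derivative_compose[OF s L_grad[OF C cy]] .
  have d2: "((\<lambda>z. L (c *\<^sub>R z)) has_derivative (\<lambda>h. h \<bullet> G y)) (at y)"
    apply (rule has_derivative_transform_within_open[OF L_grad[OF C y], of "- {0}"])
    using y si c unfolding scale_invariant_def by auto
  have "(\<lambda>h. (c *\<^sub>R h) \<bullet> G (c *\<^sub>R y)) = (\<lambda>h. h \<bullet> G y)"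
    using has_derivative_unique[OF d1 d2] .
  then have "\<And>h. h \<bullet> (c *\<^sub>R G (c *\<^sub>R y) - G y) = 0"
    by (metis (no_types, lifting) inner_diff_right inner_scaleR_left inner_scaleR_right right_minus_eq)
  from this[of "c *\<^sub>R G (c *\<^sub>R y) - G y"] show ?thesis by simp
qed

lemma H_scale:
  fixes L :: "'a::euclidean_space \<Rightarrow> real"
  assumes C: "C2_on (- {0}) L G H" and si: "scale_invariant L" and y: "y \<noteq> 0" and c: "c > 0"
  shows "H (c *\<^sub>R y) = (1 / c^2) *\<^sub>R H y"
proof -
  have s: "((\<lambda>z. c *\<^sub>R z) has_derivative (\<lambda>h. c *\<^sub>R h)) (at y)"
    by (auto intro!: derivative_eq_intros)
  have cy: "c *\<^sub>R y \<noteq> 0" using y c by auto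
  have d1: "((\<lambda>z. G (c *\<^sub>R z)) has_derivative (\<lambda>h. H (c *\<^sub>R y) (c *\<^sub>R h))) (at y)"
    using has_derivative_compose[OF s G_deriv[OF C cy]] .
  have d0: "((\<lambda>z. (1/c) *\<^sub>R G z) has_derivative (\<lambda>h. (1/c) *\<^sub>R H y h)) (at y)"
    using G_deriv[OF C y] by (auto intro!: derivative_eq_intros)
  have d2: "((\<lambda>z. G (c *\<^sub>R z)) has_derivative (\<lambda>h. (1/c) *\<^sub>R H y h)) (at y)"
    apply (rule has_derivative_transform_within_open[OF d0, of "- {0}"])
  proof -
    fix z :: 'a assume "z \<in> - {0}"
    then have "c *\<^sub>R G (c *\<^sub>R z) = G z" using G_scale[OF C si _ c] by auto
    then have "(1/c) *\<^sub>R G z = (1/c) *\<^sub>R (c *\<^sub>R G (c *\<^sub>R z))" by simp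
    also have "\<dots> = G (c *\<^sub>R z)" using c by simp
    finally show "(1/c) *\<^sub>R G z = G (c *\<^sub>R z)" .
  qed (use y in auto)
  have e: "\<And>h. H (c *\<^sub>R y) (c *\<^sub>R h) = (1/c) *\<^sub>R H y h"
    using has_derivative_unique[OF d1 d2] by metis
  show ?thesis
  proof (rule blinfun_eqI)
    fix h
    have "H (c *\<^sub>R y) h = H (c *\<^sub>R y) (c *\<^sub>R ((1/c) *\<^sub>R h))" using c by simp
    also have "\<dots> = (1/c) *\<^sub>R H y ((1/c) *\<^sub>R h)" by (rule e)
    also have "\<dots> = (1/c^2) *\<^sub>R H y h" by (simp add: blinfun.scaleR_right power2_eq_square)
    finally show "H (c *\<^sub>R y) h = ((1 / c^2) *\<^sub>R H y) h" by (simp add: blinfun.scaleR_left)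
  qed
qed

lemma bdd_H:
  fixes L :: "'a::euclidean_space \<Rightarrow> real"
  assumes C: "C2_on (- {0}) L G H"
  shows "bdd_above ((\<lambda>x. norm (H x)) ` sphere 0 1)"
proof -
  have "continuous_on (sphere 0 1) H"
    using C unfolding C2_on_def by (auto elim: continuous_on_subset)
  then have "continuous_on (sphere (0::'a) 1) (\<lambda>x. norm (H x))"
    by (intro continuous_intros)
  then have "compact ((\<lambda>x. norm (H x)) ` sphere (0::'a) 1)"
    by (intro compact_continuous_image) auto
  then show ?thesis by (intro bounded_imp_bdd_above compact_imp_bounded)
qed

lemma H_bound:
  fixes L :: "'a::euclidean_space \<Rightarrow> real"
  assumes C: "C2_on (- {0}) L G H" and si: "scale_invariant L" and y: "y \<noteq> 0"
  shows "norm (H y) \<le> hess_bound H / (norm y)^2"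
proof -
  define u where "u = (1 / norm y) *\<^sub>R y"
  have u: "u \<in> sphere 0 1" "u \<noteq> 0" using y by (auto simp: u_def)
  have yu: "y = norm y *\<^sub>R u" using y by (simp add: u_def)
  have "H y = (1 / (norm y)^2) *\<^sub>R H u"
    using H_scale[OF C si u(2), of "norm y"] y yu by simp
  then have "norm (H y) = norm (H u) / (norm y)^2" by simp
  moreover have "norm (H u) \<le> hess_bound H"
    unfolding hess_bound_def by (rule cSup_upper) (use u bdd_H[OF C] in auto)
  ultimately show ?thesis by (simp add: divide_right_mono)
qed

lemma hess_nonneg:
  fixes L :: "'a::euclidean_space \<Rightarrow> real"
  assumes C: "C2_on (- {0}) L G H"
  shows "0 \<le> hess_bound H"
proof -
  obtain b :: 'a where b: "b \<in> Basis" using nonempty_Basis by blast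
  then have "b \<in> sphere 0 1" by auto
  then have "norm (H b) \<le> hess_bound H"
    unfolding hess_bound_def by (intro cSup_upper) (use bdd_H[OF C] in auto)
  then show ?thesis by (meson norm_ge_zero order_trans)
qed

lemma euler:
  fixes L :: "'a::euclidean_space \<Rightarrow> real"
  assumes C: "C2_on (- {0}) L G H" and si: "scale_invariant L" and x: "x \<noteq> 0"
  shows "x \<bullet> G x = 0"
proof -
  have s: "((\<lambda>t::real. t *\<^sub>R x) has_derivative (\<lambda>t. t *\<^sub>R x)) (at 1)"
    by (auto intro!: derivative_eq_intros)
  have d1: "((\<lambda>t. L (t *\<^sub>R x)) has_derivative (\<lambda>t. (t *\<^sub>R x) \<bullet> G x)) (at 1)"
  proof -
    have "(L has_derivative (\<lambda>h. h \<bullet> G x)) (at ((\<lambda>t::real. t *\<^sub>R x) 1))"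
      using L_grad[OF C x] by simp
    from has_derivative_compose[OF s this] show ?thesis .
  qed
  have d2: "((\<lambda>t::real. L (t *\<^sub>R x)) has_derivative (\<lambda>t. 0)) (at 1)"
    apply (rule has_derivative_transform_within_open[OF has_derivative_const[of "L x"], of "{0<..}"])
    using si x unfolding scale_invariant_def by auto
  have "(\<lambda>t::real. (t *\<^sub>R x) \<bullet> G x) = (\<lambda>t. 0)" using has_derivative_unique[OF d1 d2] .
  from fun_cong[OF this, of 1] show ?thesis by simp
qed

lemma norm_orth: fixes x v :: "'a::real_inner"
  assumes "x \<bullet> v = 0" shows "(norm (x + t *\<^sub>R v))^2 = (norm x)^2 + t^2 * (norm v)^2"
proof -
  have "(norm (x + t *\<^sub>R v))^2 = (x + t *\<^sub>R v) \<bullet> (x + t *\<^sub>R v)" by (simp only: power2_norm_eq_inner)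
  also have "\<dots> = x \<bullet> x + 2 * t * (x \<bullet> v) + t^2 * (v \<bullet> v)"
    by (simp add: inner_add_left inner_add_right inner_commute[of v x] algebra_simps power2_eq_square)
  finally show ?thesis using assms by (simp add: power2_norm_eq_inner)
qed

theorem mainTheorem2:
  fixes L :: "'a::euclidean_space \<Rightarrow> real" and G :: "'a \<Rightarrow> 'a" and H :: "'a \<Rightarrow> 'a \<Rightarrow>\<^sub>L 'a"
    and eta lam :: real and x x' :: 'a
  assumes "C2_on (- {0}) L G H"
    and "scale_invariant L"
    and "eta > 0" and "lam > 0" and "eta * lam < 1"
    and "x \<noteq> 0"
    and "x' = (1 - eta * lam) *\<^sub>R x - eta *\<^sub>R G x"
  shows "L x - L x' \<ge> eta * (1 / (1 - eta * lam)
            - hess_bound H * eta / (2 * (norm x)^2 * (1 - eta * lam)^2)) * (norm (G x))^2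
       \<and> (eta * lam \<le> 1/2 \<longrightarrow>
            L x - L x' \<ge> eta * (1 - 2 * hess_bound H * eta / (norm x)^2) * (norm (G x))^2)"
proof -
  note C = assms(1) and si = assms(2) and x = assms(6)
  define k where "k = 1 - eta * lam"
  have k: "k > 0" using assms(5) by (simp add: k_def)
  define e where "e = eta / k"
  have e: "e > 0" using k assms(3) by (simp add: e_def)
  define g where "g = G x"
  define v where "v = - e *\<^sub>R g"
  define \<rho> where "\<rho> = hess_bound H"
  have rho: "\<rho> \<ge> 0" unfolding \<rho>_def by (rule hess_nonneg[OF C])
  have xv: "x \<bullet> v = 0" using euler[OF C si x] by (simp add: v_def g_def)
  have nv: "(norm v)^2 = e^2 * (norm g)^2" by (simp add: v_def power_mult_distrib)
  have ny: "\<And>t. (norm (x + t *\<^sub>R v))^2 = (norm x)^2 + t^2 * (norm v)^2"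
    by (rule norm_orth[OF xv])
  have nx: "(norm x)^2 > 0" using x by simp
  have yge: "\<And>t. (norm (x + t *\<^sub>R v))^2 \<ge> (norm x)^2" using ny by simp
  have ynz: "\<And>t. x + t *\<^sub>R v \<noteq> 0"
  proof -
    fix t have "(norm (x + t *\<^sub>R v))^2 > 0" using yge[of t] nx by linarith
    then show "x + t *\<^sub>R v \<noteq> 0" by auto
  qed
  have x': "x' = k *\<^sub>R (x + 1 *\<^sub>R v)"
  proof -
    have ke: "k * e = eta" using k by (simp add: e_def)
    have "k *\<^sub>R (x + 1 *\<^sub>R v) = k *\<^sub>R x - (k * e) *\<^sub>R g" by (simp add: v_def algebra_simps)
    then show ?thesis using ke assms(7) by (simp add: k_def g_def)
  qed
  have Lx': "L x' = L (x + 1 *\<^sub>R v)"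
    using si k ynz[of 1] unfolding x' scale_invariant_def by auto
  define diff :: "nat \<Rightarrow> real \<Rightarrow> real" where
    "diff m = (if m = 0 then (\<lambda>t. L (x + t *\<^sub>R v)) else if m = 1 then (\<lambda>t. G (x + t *\<^sub>R v) \<bullet> v)
       else (\<lambda>t. H (x + t *\<^sub>R v) v \<bullet> v))" for m
  have lin: "((\<lambda>t::real. x + t *\<^sub>R v) has_derivative (\<lambda>t. t *\<^sub>R v)) (at t)" for t
    by (auto intro!: derivative_eq_intros)
  have D0: "DERIV (diff 0) t :> diff 1 t" for t
  proof -
    have "((\<lambda>t. L (x + t *\<^sub>R v)) has_derivative (\<lambda>s. (s *\<^sub>R v) \<bullet> G (x + t *\<^sub>R v))) (at t)"
      using has_derivative_compose[OF lin L_grad[OF C ynz]] .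
    then have "((\<lambda>t. L (x + t *\<^sub>R v)) has_derivative (*) (G (x + t *\<^sub>R v) \<bullet> v)) (at t)"
      by (rule has_derivative_eq_rhs) (auto simp: fun_eq_iff inner_commute)
    then show ?thesis unfolding has_field_derivative_def diff_def by simp
  qed
  have D1: "DERIV (diff 1) t :> diff 2 t" for t
  proof -
    have "((\<lambda>t. G (x + t *\<^sub>R v)) has_derivative (\<lambda>s. H (x + t *\<^sub>R v) (s *\<^sub>R v))) (at t)"
      using has_derivative_compose[OF lin G_deriv[OF C ynz]] .
    then have "((\<lambda>t. G (x + t *\<^sub>R v) \<bullet> v) has_derivative (\<lambda>s. H (x + t *\<^sub>R v) (s *\<^sub>R v) \<bullet> v)) (at t)"
      by (auto intro!: derivative_eq_intros)
    then have "((\<lambda>t. G (x + t *\<^sub>R v) \<bullet> v) has_derivative (*) (H (x + t *\<^sub>R v) v \<bullet> v)) (at t)"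
      by (rule has_derivative_eq_rhs) (auto simp: fun_eq_iff blinfun.scaleR_right)
    then show ?thesis unfolding has_field_derivative_def diff_def by simp
  qed
  have "\<exists>t::real. 0 < t \<and> t < 1 \<and>
      diff 0 1 = (\<Sum>m<2. diff m 0 / fact m * 1 ^ m) + diff 2 t / fact 2 * 1 ^ 2"
    apply (rule Maclaurin[where f = "diff 0"])
    using D0 D1 by (auto simp: numeral_2_eq_2 less_Suc_eq)
  then obtain t where t: "diff 0 1 = diff 0 0 + diff 1 0 + diff 2 t / 2"
    by (auto simp: numeral_2_eq_2)
  have f0: "diff 0 0 = L x" "diff 0 1 = L x'" using Lx' by (auto simp: diff_def)
  have f1: "diff 1 0 = - e * (norm g)^2"
    by (simp add: diff_def v_def g_def power2_norm_eq_inner)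
  define y where "y = x + t *\<^sub>R v"
  have f2: "diff 2 t \<le> \<rho> * e^2 * (norm g)^2 / (norm x)^2"
  proof -
    have "diff 2 t = H y v \<bullet> v" by (simp add: diff_def y_def)
    also have "\<dots> \<le> norm (H y v) * norm v" by (rule norm_cauchy_schwarz)
    also have "\<dots> \<le> norm (H y) * norm v * norm v"
      by (intro mult_right_mono norm_blinfun) auto
    also have "\<dots> \<le> (\<rho> / (norm y)^2) * norm v * norm v"
      using H_bound[OF C si ynz[of t]] unfolding y_def \<rho>_def
      by (intro mult_right_mono) auto
    also have "\<dots> \<le> (\<rho> / (norm x)^2) * norm v * norm v"
      using yge[of t] nx rho ynz[of t] unfolding y_def
      by (intro mult_right_mono divide_left_mono) (auto intro!: mult_pos_pos)
    also have "\<dots> = \<rho> * e^2 * (norm g)^2 / (norm x)^2"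
      using nv by (simp add: power2_eq_square)
    finally show ?thesis .
  qed
  have main: "L x - L x' \<ge> e * (norm g)^2 - \<rho> * e^2 * (norm g)^2 / (2 * (norm x)^2)"
  proof -
    have t': "L x' = L x - e*(norm g)^2 + diff 2 t / 2" using t f0 f1 by simp
    have h: "\<rho>*e^2*(norm g)^2/(2*(norm x)^2) = (\<rho>*e^2*(norm g)^2/(norm x)^2)/2" by simp
    show ?thesis using t' h f2 by linarith
  qed
  have eq1: "eta * (1 / (1 - eta * lam) - \<rho> * eta / (2 * (norm x)^2 * (1 - eta * lam)^2)) * (norm g)^2
      = e * (norm g)^2 - \<rho> * e^2 * (norm g)^2 / (2 * (norm x)^2)"
    unfolding k_def[symmetric] e_def using k nx by (simp add: field_simps power2_eq_square)
  have part1: "L x - L x' \<ge> eta * (1 / (1 - eta * lam) - \<rho> * eta / (2 * (norm x)^2 * (1 - eta * lam)^2)) * (norm g)^2"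
    using main eq1 by linarith
  have part2: "L x - L x' \<ge> eta * (1 - 2 * \<rho> * eta / (norm x)^2) * (norm g)^2"
    if h: "eta * lam \<le> 1/2"
  proof -
    have kk: "k \<ge> 1/2" using h by (simp add: k_def)
    have "e \<ge> eta" using k kk assms(3) unfolding e_def
      by (simp add: field_simps) (smt (verit) assms(4) mult_pos_pos k_def)
    have ee: "e^2 \<le> 4 * eta^2"
    proof -
      have "e \<le> 2 * eta" using kk k assms(3) unfolding e_def by (simp add: field_simps)
      then have "e^2 \<le> (2*eta)^2" using e by (intro power_mono) auto
      then show ?thesis by (simp add: power_mult_distrib)
    qed
    have ng: "(norm g)^2 \<ge> 0" by simp
    have a: "e * (norm g)^2 \<ge> eta * (norm g)^2" using \<open>e \<ge> eta\<close> ng by (rule mult_right_mono)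
    have b: "\<rho> * e^2 * (norm g)^2 / (2 * (norm x)^2) \<le> \<rho> * (4 * eta^2) * (norm g)^2 / (2 * (norm x)^2)"
      using ee rho ng nx by (intro divide_right_mono mult_right_mono mult_left_mono) auto
    have c: "\<rho> * (4 * eta^2) * (norm g)^2 / (2 * (norm x)^2) = eta * (2 * \<rho> * eta / (norm x)^2) * (norm g)^2"
      using nx by (simp add: field_simps power2_eq_square)
    have "eta * (1 - 2 * \<rho> * eta / (norm x)^2) * (norm g)^2 = eta * (norm g)^2 - eta * (2 * \<rho> * eta / (norm x)^2) * (norm g)^2"
      by (simp add: algebra_simps)
    then show ?thesis using main a b c by linarith
  qed
  show ?thesis using part1 part2 unfolding \<rho>_def g_def by blast
qed

end
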